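(* Satisfaction approval voting (SAV) is the only BSWAV rule (for the fixed $m$ and $k$) that satisfies party-proportionality and aversion to unanimous committees.
   Context: Let $\mathcal C=\{c_1,\dots,c_m\}$ ($m\ge2$) be the candidates, $\mathcal A$ the set of non-empty subsets of $\mathcal C$ (ballots), and a profile a map $A:N_A\to\mathcal A$ from a non-empty finite set of voters $N_A\subseteq\mathbb N$. Fix $k\in\{1,\dots,m-1\}$, and let $\mathcal W_k$ be the set of $k$-element subsets of $\mathcal C$ (committees). An ABC voting rule maps each profile to a non-empty subset of $\mathcal W_k$. A BSWAV rule is defined by a weight vector $\alpha\in\mathbb R^m_{\ge0}$ and chooses for each profile $A$ the committees $W$ maximizing $\sum_{i\in N_A}\alpha_{|A_i|}|A_i\cap W|$. SAV is the BSWAV rule with $\alpha_x=1/x$ for $x\in\{1,\dots,m\}$. A profile $A$ is a party-list profile if there is a partition $\mathcal P_A=\{P_1,\dots,P_\ell\}$ of $\mathcal C$ such that every voter's ballot equals some $P_j$; $n_j$ denotes the number of voters whose ballot is $P_j$. An ABC voting rule $f$ is party-proportional if for all party-list profiles $A$, all $W\in f(A)$, and all parties $P_i,P_j\in\mathcal P_A$ with $n_i/|P_i|<n_j/|P_j|$, $P_i\subseteq W$ implies $P_j\subseteq W$. $f$ satisfies aversion to unanimous committees if for all party-list profiles $A$ and parties $P_i\in\mathcal P_A$: if $W\subseteq P_i$ for all $W\in f(A)$, then $n_i/|P_i|>n_j$ for every other party $P_j\in\mathcal P_A$ with $|P_j|=1$. *)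

theory Defs
  imports Complex_Main "HOL-Library.Disjoint_Sets" "HOL-Library.Cardinality"
begin

text \<open>Candidates are the elements of a finite type 'c (so m = CARD('c)).  Values of A outside N
  are irrelevant.\<close>

definition valid_profile :: "nat set \<Rightarrow> (nat \<Rightarrow> 'c set) \<Rightarrow> bool" where
  "valid_profile N A \<longleftrightarrow> finite N \<and> N \<noteq> {} \<and> (\<forall>i\<in>N. A i \<noteq> {})"

definition bswav_score :: "(nat \<Rightarrow> real) \<Rightarrow> nat set \<Rightarrow> (nat \<Rightarrow> 'c set) \<Rightarrow> 'c set \<Rightarrow> real" where
  "bswav_score \<alpha> N A W = (\<Sum>i\<in>N. \<alpha> (card (A i)) * real (card (A i \<inter> W)))"

definition bswav :: "nat \<Rightarrow> (nat \<Rightarrow> real) \<Rightarrow> nat set \<Rightarrow> (nat \<Rightarrow> 'c::finite set) \<Rightarrow> 'c set set" where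
  "bswav k \<alpha> N A = {W. card W = k \<and>
      (\<forall>W'. card W' = k \<longrightarrow> bswav_score \<alpha> N A W' \<le> bswav_score \<alpha> N A W)}"

definition sav :: "nat \<Rightarrow> nat set \<Rightarrow> (nat \<Rightarrow> 'c::finite set) \<Rightarrow> 'c set set" where
  "sav k = bswav k (\<lambda>x. 1 / real x)"

definition party_list :: "nat set \<Rightarrow> (nat \<Rightarrow> 'c set) \<Rightarrow> 'c set set \<Rightarrow> bool" where
  "party_list N A P \<longleftrightarrow> valid_profile N A \<and> partition_on UNIV P \<and> (\<forall>i\<in>N. A i \<in> P)"

definition n_votes :: "nat set \<Rightarrow> (nat \<Rightarrow> 'c set) \<Rightarrow> 'c set \<Rightarrow> nat" where
  "n_votes N A Q = card {i\<in>N. A i = Q}"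

definition party_proportional :: "(nat set \<Rightarrow> (nat \<Rightarrow> 'c set) \<Rightarrow> 'c set set) \<Rightarrow> bool" where
  "party_proportional f \<longleftrightarrow> (\<forall>N A P. party_list N A P \<longrightarrow>
     (\<forall>W\<in>f N A. \<forall>Pi\<in>P. \<forall>Pj\<in>P.
        real (n_votes N A Pi) / real (card Pi) < real (n_votes N A Pj) / real (card Pj) \<longrightarrow>
        Pi \<subseteq> W \<longrightarrow> Pj \<subseteq> W))"

definition averse_unanimous :: "(nat set \<Rightarrow> (nat \<Rightarrow> 'c set) \<Rightarrow> 'c set set) \<Rightarrow> bool" where
  "averse_unanimous f \<longleftrightarrow> (\<forall>N A P. party_list N A P \<longrightarrow>
     (\<forall>Pi\<in>P. (\<forall>W\<in>f N A. W \<subseteq> Pi) \<longrightarrow>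
        (\<forall>Pj\<in>P. Pj \<noteq> Pi \<and> card Pj = 1 \<longrightarrow>
           real (n_votes N A Pi) / real (card Pi) > real (n_votes N A Pj))))"

end

theory Submission
  imports Defs "HOL-Library.Countable" "HOL-Library.Nat_Bijection"
begin

definition val :: "(nat \<Rightarrow> real) \<Rightarrow> nat set \<Rightarrow> (nat \<Rightarrow> 'c set) \<Rightarrow> 'c \<Rightarrow> real" where
  "val \<alpha> N A w = (\<Sum>i\<in>{i\<in>N. w \<in> A i}. \<alpha> (card (A i)))"

lemma score_val:
  fixes A :: "nat \<Rightarrow> 'c::finite set"
  assumes "finite N"
  shows "bswav_score \<alpha> N A W = (\<Sum>w\<in>W. val \<alpha> N A w)"
proof -
  have "bswav_score \<alpha> N A W = (\<Sum>i\<in>N. \<Sum>w\<in>W. if w \<in> A i then \<alpha> (card (A i)) else 0)"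
    unfolding bswav_score_def
  proof (rule sum.cong[OF refl])
    fix i assume "i \<in> N"
    have "real (card (A i \<inter> W)) = (\<Sum>w\<in>W. if w \<in> A i then 1 else 0)"
      by (simp add: sum.If_cases Int_commute)
    then show "\<alpha> (card (A i)) * real (card (A i \<inter> W)) = (\<Sum>w\<in>W. if w \<in> A i then \<alpha> (card (A i)) else 0)"
      by (simp add: sum_distrib_left if_distrib cong: if_cong)
  qed
  also have "\<dots> = (\<Sum>w\<in>W. \<Sum>i\<in>N. if w \<in> A i then \<alpha> (card (A i)) else 0)"
    by (rule sum.swap)
  also have "\<dots> = (\<Sum>w\<in>W. val \<alpha> N A w)"
    unfolding val_def using assms by (simp add: sum.If_cases Int_def conj_commute)
  finally show ?thesis .
qed

lemma score_swap:
  fixes A :: "nat \<Rightarrow> 'c::finite set"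
  assumes "finite N" "a \<notin> W" "b \<in> W"
  shows "bswav_score \<alpha> N A (insert a (W - {b})) = bswav_score \<alpha> N A W - val \<alpha> N A b + val \<alpha> N A a"
  using assms by (simp add: score_val sum.remove[of W b] sum.insert)

lemma card_swap:
  fixes W :: "'c::finite set"
  assumes "a \<notin> W" "b \<in> W"
  shows "card (insert a (W - {b})) = card W"
proof -
  have "card W > 0" using assms(2) by (simp add: card_gt_0_iff) blast
  then show ?thesis using assms by (simp add: card.insert_remove)
qed

lemma exchange:
  fixes A :: "nat \<Rightarrow> 'c::finite set"
  assumes "finite N" "W \<in> bswav k \<alpha> N A" "a \<notin> W" "b \<in> W"
  shows "val \<alpha> N A a \<le> val \<alpha> N A b"
proof -
  from assms(2) have c: "card W = k" and m: "\<forall>W'. card W' = k \<longrightarrow> bswav_score \<alpha> N A W' \<le> bswav_score \<alpha> N A W"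
    unfolding bswav_def by auto
  have "card (insert a (W - {b})) = k" using card_swap assms c by metis
  with m have "bswav_score \<alpha> N A (insert a (W - {b})) \<le> bswav_score \<alpha> N A W" by blast
  then show ?thesis using score_swap[OF assms(1,3,4)] by simp
qed

lemma swap_win:
  fixes A :: "nat \<Rightarrow> 'c::finite set"
  assumes "finite N" "W \<in> bswav k \<alpha> N A" "a \<notin> W" "b \<in> W" "val \<alpha> N A b \<le> val \<alpha> N A a"
  shows "insert a (W - {b}) \<in> bswav k \<alpha> N A"
proof -
  from assms(2) have c: "card W = k" and m: "\<forall>W'. card W' = k \<longrightarrow> bswav_score \<alpha> N A W' \<le> bswav_score \<alpha> N A W"
    unfolding bswav_def by auto
  have "card (insert a (W - {b})) = k" using card_swap assms c by metis
  moreover have "bswav_score \<alpha> N A W \<le> bswav_score \<alpha> N A (insert a (W - {b}))"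
    using score_swap[OF assms(1,3,4)] assms(5) by simp
  ultimately show ?thesis using m unfolding bswav_def by force
qed

lemma bswav_nonempty:
  assumes "k \<le> CARD('c::finite)"
  shows "\<exists>W. W \<in> (bswav k \<alpha> N (A :: nat \<Rightarrow> 'c set))"
proof -
  let ?S = "{W :: 'c set. card W = k}"
  have fin: "finite ?S" by simp
  obtain W0 :: "'c set" where "card W0 = k" using obtain_subset_with_card_n[OF assms] by metis
  then have ne: "?S \<noteq> {}" by blast
  let ?M = "Max (bswav_score \<alpha> N A ` ?S)"
  have "?M \<in> bswav_score \<alpha> N A ` ?S" using fin ne by (intro Max_in) auto
  then obtain W where W: "W \<in> ?S" "bswav_score \<alpha> N A W = ?M" by auto
  have "\<forall>W'\<in>?S. bswav_score \<alpha> N A W' \<le> bswav_score \<alpha> N A W"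
    using W fin by (simp add: Max_ge)
  note W this
  then show ?thesis unfolding bswav_def by auto
qed


lemma val_party:
  fixes A :: "nat \<Rightarrow> 'c::finite set"
  assumes "party_list N A Ps" "Q \<in> Ps" "w \<in> Q"
  shows "val \<alpha> N A w = real (n_votes N A Q) * \<alpha> (card Q)"
proof -
  have d: "disjoint Ps" using assms(1) unfolding party_list_def partition_on_def by auto
  have "{i\<in>N. w \<in> A i} = {i\<in>N. A i = Q}"
  proof (rule set_eqI, rule iffI)
    fix i assume "i \<in> {i\<in>N. w \<in> A i}"
    then have "i \<in> N" "w \<in> A i" by auto
    moreover have "A i \<in> Ps" using assms(1) \<open>i \<in> N\<close> unfolding party_list_def by auto
    ultimately show "i \<in> {i\<in>N. A i = Q}" using disjointD[OF d _ assms(2)] assms(3) by blast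
  qed (use assms(3) in auto)
  then show ?thesis unfolding val_def n_votes_def by simp
qed

lemma construct:
  fixes Bs :: "'c::finite set set" and cnt :: "'c set \<Rightarrow> nat"
  shows "\<exists>N (A :: nat \<Rightarrow> 'c set). finite N \<and> (\<forall>i\<in>N. A i \<in> Bs) \<and> (\<forall>Q\<in>Bs. n_votes N A Q = cnt Q)
      \<and> (N = {} \<longrightarrow> (\<forall>Q\<in>Bs. cnt Q = 0))"
proof -
  define enc :: "'c set \<times> nat \<Rightarrow> nat" where "enc = (\<lambda>(B,j). prod_encode (to_nat B, j))"
  define N where "N = enc ` (SIGMA B:Bs. {..<cnt B})"
  define A :: "nat \<Rightarrow> 'c set" where "A = (\<lambda>i. from_nat (fst (prod_decode i)))"
  have Aenc: "A (enc (B, j)) = B" for B j unfolding A_def enc_def by simp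
  have injenc: "inj enc" unfolding enc_def inj_def by auto
  have "finite N" unfolding N_def by simp
  moreover have "\<forall>i\<in>N. A i \<in> Bs" unfolding N_def using Aenc by auto
  moreover have "\<forall>Q\<in>Bs. n_votes N A Q = cnt Q"
  proof
    fix Q assume Q: "Q \<in> Bs"
    have "{i\<in>N. A i = Q} = enc ` ({Q} \<times> {..<cnt Q})"
      unfolding N_def using Aenc Q by force
    then have "n_votes N A Q = card ({Q} \<times> {..<cnt Q})"
      unfolding n_votes_def using card_image[OF inj_on_subset[OF injenc]] by simp
    then show "n_votes N A Q = cnt Q" by (simp add: card_cartesian_product)
  qed
  moreover have "N = {} \<longrightarrow> (\<forall>Q\<in>Bs. cnt Q = 0)"
    unfolding N_def by auto
  ultimately show ?thesis by blast
qed

lemma profile: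
  fixes P :: "'c::finite set"
  assumes "P \<noteq> {}" "0 < nP \<or> 0 < nc" "P \<noteq> UNIV"
  defines "Ps \<equiv> insert P ((\<lambda>d. {d}) ` (- P))"
  shows "\<exists>N (A :: nat \<Rightarrow> 'c set). party_list N A Ps \<and> n_votes N A P = nP \<and>
     (\<forall>d. d \<notin> P \<longrightarrow> n_votes N A {d} = nc) \<and>
     (\<forall>\<alpha> w. val \<alpha> N A w = (if w \<in> P then real nP * \<alpha> (card P) else real nc * \<alpha> 1))"
proof -
  obtain N A where NA: "finite N" "\<forall>i\<in>N. A i \<in> Ps"
    "\<forall>Q\<in>Ps. n_votes N A Q = (if Q = P then nP else nc)"
    "N = {} \<longrightarrow> (\<forall>Q\<in>Ps. (if Q = P then nP else nc) = 0)"
    using construct[of Ps "\<lambda>Q. if Q = P then nP else nc"] by blast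
  have sing: "{d} \<noteq> P" if "d \<notin> P" for d using that by auto
  have part: "partition_on UNIV Ps"
  proof (rule partition_onI)
    show "\<Union> Ps = UNIV" unfolding Ps_def by auto
    show "{} \<notin> Ps" unfolding Ps_def using assms(1) by auto
    fix p q assume "p \<in> Ps" "q \<in> Ps" "p \<noteq> q"
    then show "disjnt p q" unfolding Ps_def disjnt_def by auto
  qed
  have Nne: "N \<noteq> {}"
  proof
    assume "N = {}"
    with NA(4) have h: "\<forall>Q\<in>Ps. (if Q = P then nP else nc) = 0" by blast
    have "nP = 0" using h unfolding Ps_def by auto
    moreover have "nc = 0"
    proof (cases "P = UNIV")
      case True
      then show ?thesis using assms(3) by simp
    next
      case False
      then obtain d where "d \<notin> P" by auto
      then have "{d} \<in> Ps" unfolding Ps_def by auto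
      then have "(if {d} = P then nP else nc) = 0" using h by blast
      then show ?thesis using sing[OF \<open>d \<notin> P\<close>] by simp
    qed
    ultimately show False using assms(2) by simp
  qed
  have pl: "party_list N A Ps"
    unfolding party_list_def valid_profile_def using NA(1,2) Nne part
    by (metis partition_onD3)
  moreover have "n_votes N A P = nP" using NA(3) unfolding Ps_def by auto
  moreover have "\<forall>d. d \<notin> P \<longrightarrow> n_votes N A {d} = nc" using NA(3) sing unfolding Ps_def by auto
  moreover have "\<forall>\<alpha> w. val \<alpha> N A w = (if w \<in> P then real nP * \<alpha> (card P) else real nc * \<alpha> 1)"
  proof (intro allI)
    fix \<alpha> w
    show "val \<alpha> N A w = (if w \<in> P then real nP * \<alpha> (card P) else real nc * \<alpha> 1)"
    proof (cases "w \<in> P")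
      case True
      then show ?thesis using val_party[OF pl, of P w \<alpha>] \<open>n_votes N A P = nP\<close> unfolding Ps_def by simp
    next
      case False
      then have "{w} \<in> Ps" unfolding Ps_def by auto
      then show ?thesis using val_party[OF pl \<open>{w} \<in> Ps\<close>, of w \<alpha>] False NA(3) sing[of w] by simp
    qed
  qed
  ultimately show ?thesis by blast
qed


lemma AU_D:
  assumes "averse_unanimous f" "party_list N A Ps" "Qi \<in> Ps" "\<forall>W\<in>f N A. W \<subseteq> Qi"
    "Qj \<in> Ps" "Qj \<noteq> Qi" "card Qj = 1"
  shows "real (n_votes N A Qi) / real (card Qi) > real (n_votes N A Qj)"
  using assms unfolding averse_unanimous_def by blast

lemma PP_D:
  assumes "party_proportional f" "party_list N A Ps" "W \<in> f N A" "Qi \<in> Ps" "Qj \<in> Ps"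
    "real (n_votes N A Qi) / real (card Qi) < real (n_votes N A Qj) / real (card Qj)" "Qi \<subseteq> W"
  shows "Qj \<subseteq> W"
  using assms unfolding party_proportional_def by blast

lemma alpha1_pos:
  fixes \<alpha> :: "nat \<Rightarrow> real"
  assumes PP: "party_proportional (bswav k \<alpha> :: nat set \<Rightarrow> (nat \<Rightarrow> 'c::finite set) \<Rightarrow> 'c set set)"
    and k: "1 \<le> k" "k < CARD('c)" and a1: "\<alpha> 1 \<ge> 0"
  shows "\<alpha> 1 > 0"
proof (rule ccontr)
  assume "\<not> \<alpha> 1 > 0"
  then have z: "\<alpha> 1 = 0" using a1 by simp
  obtain a :: 'c where True by simp
  have ne: "UNIV \<noteq> {a}" using k by (metis card.empty card_insert_disjoint empty_iff finite.emptyI linorder_not_le One_nat_def card_1_singleton_iff leD)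
  obtain N A where NA: "party_list N A (insert {a} ((\<lambda>d. {d}) ` (- {a})))" "n_votes N A {a} = 1"
     "\<forall>d. d \<notin> {a} \<longrightarrow> n_votes N A {d} = 0"
     "\<forall>\<alpha> w. val \<alpha> N A w = (if w \<in> {a} then real 1 * \<alpha> (card {a}) else real 0 * \<alpha> 1)"
    using profile[of "{a}" 1 0] ne by auto
  have fin: "finite N" using NA(1) unfolding party_list_def valid_profile_def by auto
  have v0: "val \<alpha> N A w = 0" for w using NA(4) z by simp
  have "card (UNIV - {a}) = CARD('c) - 1" by simp
  then have "k \<le> card (UNIV - {a})" using k by simp
  then obtain W where W: "W \<subseteq> UNIV - {a}" "card W = k" by (meson obtain_subset_with_card_n)
  have "W \<in> bswav k \<alpha> N A"
    unfolding bswav_def using W(2) by (simp add: score_val[OF fin] v0)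
  moreover obtain b where "b \<in> W" using W(2) k by fastforce
  moreover have "real (n_votes N A {b}) / real (card {b}) < real (n_votes N A {a}) / real (card {a})"
    using NA(2,3) W(1) \<open>b \<in> W\<close> by auto
  moreover have "{b} \<in> insert {a} ((\<lambda>d. {d}) ` (- {a}))" "{a} \<in> insert {a} ((\<lambda>d. {d}) ` (- {a}))"
    using W(1) \<open>b \<in> W\<close> by auto
  ultimately have "{a} \<subseteq> W" using PP NA(1) unfolding party_proportional_def by blast
  then show False using W(1) by auto
qed


lemma caseA:
  fixes \<alpha> :: "nat \<Rightarrow> real"
  assumes PP: "party_proportional (bswav k \<alpha> :: nat set \<Rightarrow> (nat \<Rightarrow> 'c::finite set) \<Rightarrow> 'c set set)"
    and AU: "averse_unanimous (bswav k \<alpha> :: nat set \<Rightarrow> (nat \<Rightarrow> 'c::finite set) \<Rightarrow> 'c set set)"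
    and k: "1 \<le> k" "k < CARD('c)" and a1: "\<alpha> 1 > 0"
    and x: "1 \<le> x" "x < CARD('c)" and gt: "real x * \<alpha> x > \<alpha> 1"
  shows False
proof -
  define d where "d = real x * \<alpha> x - \<alpha> 1"
  have d: "d > 0" using gt d_def by simp
  obtain n0 :: nat where "\<alpha> x / d < real n0" using reals_Archimedean2 by blast
  define n where "n = Suc n0"
  have n1: "n \<ge> 1" unfolding n_def by simp
  have "\<alpha> x / d < real n" using \<open>\<alpha> x / d < real n0\<close> unfolding n_def by simp
  then have nd: "\<alpha> x < real n * d" using d by (simp add: divide_less_eq mult.commute)
  define nP where "nP = x * n - 1"
  have xn: "x * n \<ge> 1" using x n1 by simp
  have rnP: "real nP = real x * real n - 1" unfolding nP_def using xn by (simp add: of_nat_diff)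
  obtain P :: "'c set" where P: "card P = x" using obtain_subset_with_card_n[of x "UNIV :: 'c set"] x by auto
  have Pne: "P \<noteq> {}" using P x by auto
  have PU: "P \<noteq> UNIV" using P x by auto
  define Ps where "Ps = insert P ((\<lambda>d. {d}) ` (- P))"
  obtain N A where NA: "party_list N A Ps" "n_votes N A P = nP"
     "\<forall>d. d \<notin> P \<longrightarrow> n_votes N A {d} = n"
     "\<forall>\<alpha> w. val \<alpha> N A w = (if w \<in> P then real nP * \<alpha> (card P) else real n * \<alpha> 1)"
    using profile[of P nP n, OF Pne _ PU] n1 unfolding Ps_def by auto
  have fin: "finite N" using NA(1) unfolding party_list_def valid_profile_def by auto
  have vgt: "real n * \<alpha> 1 < real nP * \<alpha> x"
  proof -
    have "real nP * \<alpha> x = (real x * real n - 1) * \<alpha> x" using rnP by simp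
    also have "\<dots> = real n * (real x * \<alpha> x) - \<alpha> x" by (simp add: algebra_simps)
    finally have "real nP * \<alpha> x = real n * (real x * \<alpha> x) - \<alpha> x" .
    then show ?thesis using nd unfolding d_def by (simp add: algebra_simps)
  qed
  have valP: "val \<alpha> N A w = real nP * \<alpha> x" if "w \<in> P" for w using NA(4) P that by simp
  have valS: "val \<alpha> N A w = real n * \<alpha> 1" if "w \<notin> P" for w using NA(4) that by simp
  obtain W where W: "W \<in> bswav k \<alpha> N A" using bswav_nonempty[of k \<alpha> N A] k by auto
  have cW: "card W = k" using W unfolding bswav_def by auto
  have PPs: "P \<in> Ps" unfolding Ps_def by simp
  have ratio: "real nP / real (card P) < real n" using P x rnP by (simp add: field_simps)
  show False
  proof (cases "k \<le> x")
    case True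
    have sub: "W' \<subseteq> P" if W': "W' \<in> bswav k \<alpha> N A" for W'
    proof (rule ccontr)
      assume "\<not> W' \<subseteq> P"
      then obtain b where b: "b \<in> W'" "b \<notin> P" by auto
      have cW': "card W' = k" using W' unfolding bswav_def by auto
      have "\<not> P \<subseteq> W'"
      proof
        assume "P \<subseteq> W'"
        then have "card P \<le> card W'" by (simp add: card_mono)
        then have "P = W'" using \<open>P \<subseteq> W'\<close> cW' P True by (metis card_subset_eq finite le_antisym)
        then show False using b by auto
      qed
      then obtain a where a: "a \<in> P" "a \<notin> W'" by auto
      have "val \<alpha> N A a \<le> val \<alpha> N A b" using exchange[OF fin W' a(2) b(1)] .
      then show False using valP[OF a(1)] valS[OF b(2)] vgt by simp
    qed
    obtain c where c: "c \<notin> P" using PU by auto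
    have "{c} \<in> Ps" "{c} \<noteq> P" "card {c} = 1" unfolding Ps_def using c by auto
    then have "real (n_votes N A P) / real (card P) > real (n_votes N A {c})"
      using AU_D[OF AU NA(1) PPs] sub by blast
    then show False using NA(2,3) c ratio by simp
  next
    case False
    have PW: "P \<subseteq> W"
    proof (rule ccontr)
      assume "\<not> P \<subseteq> W"
      then obtain a where a: "a \<in> P" "a \<notin> W" by auto
      have "\<not> W \<subseteq> P"
      proof
        assume "W \<subseteq> P"
        then have "card W \<le> card P" by (simp add: card_mono)
        then show False using cW P False by simp
      qed
      then obtain b where b: "b \<in> W" "b \<notin> P" by auto
      have "val \<alpha> N A a \<le> val \<alpha> N A b" using exchange[OF fin W a(2) b(1)] .
      then show False using valP[OF a(1)] valS[OF b(2)] vgt by simp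
    qed
    have "W \<noteq> UNIV" using cW k by auto
    then obtain c where c: "c \<notin> W" by auto
    then have cP: "c \<notin> P" using PW by auto
    have "{c} \<in> Ps" unfolding Ps_def using cP by auto
    moreover have "real (n_votes N A P) / real (card P) < real (n_votes N A {c}) / real (card {c})"
      using NA(2,3) cP ratio by simp
    ultimately have "{c} \<subseteq> W" using PP_D[OF PP NA(1) W PPs] PW by blast
    then show False using c by simp
  qed
qed


lemma caseB:
  fixes \<alpha> :: "nat \<Rightarrow> real"
  assumes PP: "party_proportional (bswav k \<alpha> :: nat set \<Rightarrow> (nat \<Rightarrow> 'c::finite set) \<Rightarrow> 'c set set)"
    and k: "1 \<le> k" "k < CARD('c)"
    and x: "1 \<le> x" "x < CARD('c)" and lt: "real x * \<alpha> x < \<alpha> 1"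
  shows False
proof -
  define d where "d = \<alpha> 1 - real x * \<alpha> x"
  have d: "d > 0" using lt d_def by simp
  obtain n0 :: nat where "\<alpha> x / d < real n0" using reals_Archimedean2 by blast
  define n where "n = Suc n0"
  have n1: "n \<ge> 1" unfolding n_def by simp
  have "\<alpha> x / d < real n" using \<open>\<alpha> x / d < real n0\<close> unfolding n_def by simp
  then have nd: "\<alpha> x < real n * d" using d by (simp add: divide_less_eq mult.commute)
  define nP where "nP = x * n + 1"
  have rnP: "real nP = real x * real n + 1" unfolding nP_def by simp
  obtain P :: "'c set" where P: "card P = x" using obtain_subset_with_card_n[of x "UNIV :: 'c set"] x by auto
  have Pne: "P \<noteq> {}" using P x by auto
  have PU: "P \<noteq> UNIV" using P x by auto
  define Ps where "Ps = insert P ((\<lambda>d. {d}) ` (- P))"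
  obtain N A where NA: "party_list N A Ps" "n_votes N A P = nP"
     "\<forall>d. d \<notin> P \<longrightarrow> n_votes N A {d} = n"
     "\<forall>\<alpha> w. val \<alpha> N A w = (if w \<in> P then real nP * \<alpha> (card P) else real n * \<alpha> 1)"
    using profile[of P nP n, OF Pne _ PU] n1 unfolding Ps_def by auto
  have fin: "finite N" using NA(1) unfolding party_list_def valid_profile_def by auto
  have vlt: "real nP * \<alpha> x < real n * \<alpha> 1"
  proof -
    have "real nP * \<alpha> x = (real x * real n + 1) * \<alpha> x" using rnP by simp
    also have "\<dots> = real n * (real x * \<alpha> x) + \<alpha> x" by (simp add: algebra_simps)
    finally have "real nP * \<alpha> x = real n * (real x * \<alpha> x) + \<alpha> x" .
    then show ?thesis using nd unfolding d_def by (simp add: algebra_simps)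
  qed
  have valP: "val \<alpha> N A w = real nP * \<alpha> x" if "w \<in> P" for w using NA(4) P that by simp
  have valS: "val \<alpha> N A w = real n * \<alpha> 1" if "w \<notin> P" for w using NA(4) that by simp
  obtain W where W: "W \<in> bswav k \<alpha> N A" using bswav_nonempty[of k \<alpha> N A] k by auto
  have cW: "card W = k" using W unfolding bswav_def by auto
  have PPs: "P \<in> Ps" unfolding Ps_def by simp
  have ratio: "real n < real nP / real (card P)" using P x rnP by (simp add: field_simps)
  have nPW: "\<not> P \<subseteq> W"
  proof
    assume PW: "P \<subseteq> W"
    have "W \<noteq> UNIV" using cW k by auto
    then obtain s where s: "s \<notin> W" by auto
    then have sP: "s \<notin> P" using PW by auto
    obtain a where a: "a \<in> P" using Pne by auto
    have "val \<alpha> N A s \<le> val \<alpha> N A a" using exchange[OF fin W s] a PW by auto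
    then show False using valP[OF a] valS[OF sP] vlt by simp
  qed
  obtain c where c: "c \<in> W" "c \<notin> P"
  proof (rule ccontr)
    assume h: "\<not> thesis"
    have WP: "W \<subseteq> P" using h that by blast
    obtain a where a: "a \<in> W" using cW k by fastforce
    obtain s where s: "s \<notin> P" using PU by auto
    then have "s \<notin> W" using WP by auto
    have "val \<alpha> N A s \<le> val \<alpha> N A a" using exchange[OF fin W \<open>s \<notin> W\<close> a] .
    then show False using valP[of a] a WP valS[OF s] vlt by auto
  qed
  have "{c} \<in> Ps" unfolding Ps_def using c by auto
  moreover have "real (n_votes N A {c}) / real (card {c}) < real (n_votes N A P) / real (card P)"
    using NA(2,3) c ratio by simp
  ultimately have "P \<subseteq> W" using PP_D[OF PP NA(1) W \<open>{c} \<in> Ps\<close> PPs] c by blast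
  then show False using nPW by simp
qed


lemma affine:
  fixes \<alpha> :: "nat \<Rightarrow> real" and A :: "nat \<Rightarrow> 'c::finite set"
  assumes vp: "valid_profile N A" and a1: "\<alpha> 1 > 0"
    and eq: "\<forall>x. 1 \<le> x \<and> x < CARD('c) \<longrightarrow> real x * \<alpha> x = \<alpha> 1"
  shows "bswav k \<alpha> N A = sav k N A"
proof -
  define m where "m = CARD('c)"
  define D where "D = (\<Sum>i\<in>N. if card (A i) = m then (\<alpha> m - \<alpha> 1 / real m) * real k else 0)"
  have rel: "bswav_score \<alpha> N A W = \<alpha> 1 * bswav_score (\<lambda>x. 1 / real x) N A W + D"
    if cW: "card W = k" for W :: "'c set"
  proof -
    have "bswav_score \<alpha> N A W = (\<Sum>i\<in>N. \<alpha> 1 * ((1 / real (card (A i))) * real (card (A i \<inter> W)))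
        + (if card (A i) = m then (\<alpha> m - \<alpha> 1 / real m) * real k else 0))"
      unfolding bswav_score_def
    proof (rule sum.cong[OF refl])
      fix i assume i: "i \<in> N"
      have ne: "A i \<noteq> {}" using vp i unfolding valid_profile_def by auto
      have c1: "card (A i) \<ge> 1" proof -
        have "card (A i) > 0" using ne by (simp add: card_gt_0_iff)
        then show ?thesis by simp
      qed
      have cm: "card (A i) \<le> m" unfolding m_def by (simp add: card_mono)
      show "\<alpha> (card (A i)) * real (card (A i \<inter> W)) = \<alpha> 1 * ((1 / real (card (A i))) * real (card (A i \<inter> W)))
        + (if card (A i) = m then (\<alpha> m - \<alpha> 1 / real m) * real k else 0)"
      proof (cases "card (A i) = m")
        case True
        then have "A i = UNIV" unfolding m_def by (metis card_subset_eq finite subset_UNIV)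
        then have "card (A i \<inter> W) = k" using cW by simp
        then show ?thesis using True by (simp add: algebra_simps)
      next
        case False
        then have "card (A i) < m" using cm by simp
        then have "real (card (A i)) * \<alpha> (card (A i)) = \<alpha> 1" using eq c1 unfolding m_def by blast
        moreover have "real (card (A i)) \<noteq> 0" using c1 ne by simp
        ultimately have "\<alpha> (card (A i)) = \<alpha> 1 / real (card (A i))"
          by (metis nonzero_mult_div_cancel_left)
        then show ?thesis using False by simp
      qed
    qed
    also have "\<dots> = \<alpha> 1 * bswav_score (\<lambda>x. 1 / real x) N A W + D"
      unfolding bswav_score_def D_def by (simp add: sum.distrib sum_distrib_left)
    finally show ?thesis .
  qed
  have iff: "bswav_score \<alpha> N A W' \<le> bswav_score \<alpha> N A W \<longleftrightarrow>
      bswav_score (\<lambda>x. 1 / real x) N A W' \<le> bswav_score (\<lambda>x. 1 / real x) N A W"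
    if "card W = k" "card W' = k" for W W' :: "'c set"
    using rel[OF that(1)] rel[OF that(2)] a1 by simp
  show ?thesis unfolding sav_def bswav_def
    using iff by blast
qed


lemma sav_props:
  fixes \<alpha> :: "nat \<Rightarrow> real"
  assumes k: "1 \<le> k" "k < CARD('c)"
    and H: "\<forall>N (A :: nat \<Rightarrow> 'c::finite set). valid_profile N A \<longrightarrow> bswav k \<alpha> N A = sav k N A"
  shows "party_proportional (bswav k \<alpha> :: nat set \<Rightarrow> (nat \<Rightarrow> 'c::finite set) \<Rightarrow> 'c set set)
     \<and> averse_unanimous (bswav k \<alpha> :: nat set \<Rightarrow> (nat \<Rightarrow> 'c::finite set) \<Rightarrow> 'c set set)"
proof
  let ?s = "\<lambda>x. 1 / real x"
  show "party_proportional (bswav k \<alpha> :: nat set \<Rightarrow> (nat \<Rightarrow> 'c::finite set) \<Rightarrow> 'c set set)"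
    unfolding party_proportional_def
  proof (intro allI impI ballI)
    fix N and A :: "nat \<Rightarrow> 'c set" and Ps W Qi Qj
    assume pl: "party_list N A Ps" and W: "W \<in> bswav k \<alpha> N A" and Qi: "Qi \<in> Ps" and Qj: "Qj \<in> Ps"
      and r: "real (n_votes N A Qi) / real (card Qi) < real (n_votes N A Qj) / real (card Qj)"
      and sub: "Qi \<subseteq> W"
    have vp: "valid_profile N A" using pl unfolding party_list_def by auto
    have fin: "finite N" using vp unfolding valid_profile_def by auto
    have W': "W \<in> bswav k ?s N A" using W H vp unfolding sav_def by auto
    show "Qj \<subseteq> W"
    proof (rule ccontr)
      assume "\<not> Qj \<subseteq> W"
      then obtain c where c: "c \<in> Qj" "c \<notin> W" by auto
      have "Qi \<noteq> {}" using pl Qi unfolding party_list_def partition_on_def by auto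
      then obtain d where d: "d \<in> Qi" by auto
      have "val ?s N A c \<le> val ?s N A d" using exchange[OF fin W' c(2)] d sub by auto
      then show False using val_party[OF pl Qj c(1), of ?s] val_party[OF pl Qi d, of ?s] r by simp
    qed
  qed
  show "averse_unanimous (bswav k \<alpha> :: nat set \<Rightarrow> (nat \<Rightarrow> 'c::finite set) \<Rightarrow> 'c set set)"
    unfolding averse_unanimous_def
  proof (intro allI impI ballI)
    fix N and A :: "nat \<Rightarrow> 'c set" and Ps Qi Qj
    assume pl: "party_list N A Ps" and Qi: "Qi \<in> Ps" and all: "\<forall>W\<in>bswav k \<alpha> N A. W \<subseteq> Qi"
      and Qj: "Qj \<in> Ps" and h: "Qj \<noteq> Qi \<and> card Qj = 1"
    have vp: "valid_profile N A" using pl unfolding party_list_def by auto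
    have fin: "finite N" using vp unfolding valid_profile_def by auto
    have eqs: "bswav k \<alpha> N A = bswav k ?s N A" using H vp unfolding sav_def by auto
    obtain c where cQ: "Qj = {c}" using h card_1_singletonE by blast
    have disj: "Qj \<inter> Qi = {}" using pl Qi Qj h unfolding party_list_def partition_on_def
      by (meson disjointD)
    show "real (n_votes N A Qi) / real (card Qi) > real (n_votes N A Qj)"
    proof (rule ccontr)
      assume "\<not> ?thesis"
      then have le: "real (n_votes N A Qi) / real (card Qi) \<le> real (n_votes N A Qj)" by simp
      obtain W where W: "W \<in> bswav k ?s N A" using bswav_nonempty[of k ?s N A] k by auto
      have cW: "card W = k" using W unfolding bswav_def by auto
      obtain d where d: "d \<in> W" using cW k by fastforce
      have WQ: "W \<subseteq> Qi" using all W eqs by auto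
      have cnW: "c \<notin> W" using WQ disj cQ by auto
      have "val ?s N A d \<le> val ?s N A c"
        using val_party[OF pl Qj, of c ?s] val_party[OF pl Qi, of d ?s] d WQ cQ le by auto
      then have "insert c (W - {d}) \<in> bswav k ?s N A" using swap_win[OF fin W cnW d] by simp
      then have "insert c (W - {d}) \<subseteq> Qi" using all eqs by auto
      then show False using disj cQ by auto
    qed
  qed
qed

theorem proposition3:
  fixes k :: nat and \<alpha> :: "nat \<Rightarrow> real"
  assumes "CARD('c) \<ge> 2" and "1 \<le> k" and "k < CARD('c)"
    and "\<forall>x\<in>{1..CARD('c)}. \<alpha> x \<ge> 0"
  shows "(party_proportional (bswav k \<alpha> :: nat set \<Rightarrow> (nat \<Rightarrow> 'c::finite set) \<Rightarrow> 'c set set)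
            \<and> averse_unanimous (bswav k \<alpha> :: nat set \<Rightarrow> (nat \<Rightarrow> 'c::finite set) \<Rightarrow> 'c set set))
         \<longleftrightarrow> (\<forall>N (A :: nat \<Rightarrow> 'c::finite set). valid_profile N A \<longrightarrow> bswav k \<alpha> N A = sav k N A)"
proof
  assume h: "party_proportional (bswav k \<alpha> :: nat set \<Rightarrow> (nat \<Rightarrow> 'c::finite set) \<Rightarrow> 'c set set)
            \<and> averse_unanimous (bswav k \<alpha> :: nat set \<Rightarrow> (nat \<Rightarrow> 'c::finite set) \<Rightarrow> 'c set set)"
  have a10: "\<alpha> 1 \<ge> 0" using assms(1,4) by auto
  have a1: "\<alpha> 1 > 0" using alpha1_pos[OF conjunct1[OF h] assms(2,3) a10] .
  have eq: "\<forall>x. 1 \<le> x \<and> x < CARD('c) \<longrightarrow> real x * \<alpha> x = \<alpha> 1"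
  proof (intro allI impI)
    fix x assume x: "1 \<le> x \<and> x < CARD('c)"
    show "real x * \<alpha> x = \<alpha> 1"
    proof (rule ccontr)
      assume "real x * \<alpha> x \<noteq> \<alpha> 1"
      then consider "real x * \<alpha> x > \<alpha> 1" | "real x * \<alpha> x < \<alpha> 1" by linarith
      then show False
      proof cases
        case 1
        show False using caseA[OF conjunct1[OF h] conjunct2[OF h] assms(2,3) a1 conjunct1[OF x] conjunct2[OF x] 1] .
      next
        case 2
        show False using caseB[OF conjunct1[OF h] assms(2,3) conjunct1[OF x] conjunct2[OF x] 2] .
      qed
    qed
  qed
  show "\<forall>N (A :: nat \<Rightarrow> 'c::finite set). valid_profile N A \<longrightarrow> bswav k \<alpha> N A = sav k N A"
    using affine[OF _ a1 eq] by blast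
next
  assume "\<forall>N (A :: nat \<Rightarrow> 'c::finite set). valid_profile N A \<longrightarrow> bswav k \<alpha> N A = sav k N A"
  then show "party_proportional (bswav k \<alpha> :: nat set \<Rightarrow> (nat \<Rightarrow> 'c::finite set) \<Rightarrow> 'c set set)
            \<and> averse_unanimous (bswav k \<alpha> :: nat set \<Rightarrow> (nat \<Rightarrow> 'c::finite set) \<Rightarrow> 'c set set)"
    using sav_props[OF assms(2,3)] by blast
qed

end
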